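(* Let $k\ge2$ be an integer and $\exp_k(x)=\sum_{T\in\mathbb P}\alpha_T x^T$. Then all coefficients $\alpha_T$ are nonnegative real numbers, for every $n\ge0$ $$\sum_{T\in\mathbb P,\ \deg T=n}\alpha_T=\frac1{n!},$$ and the radius of convergence of $\exp_k(x)$ is $\infty$.
   Context: Let $\mathbb P$ denote the set of finite planar reduced rooted trees (children of each vertex linearly ordered, no vertex with exactly one child), including the empty tree $\mathbf 1$ and the one-vertex tree $|$; $\deg(T)$ is the number of leaves. The algebra $\mathbb C\{x\}_{\mathbb P}$ has basis $\{x^T\}$, $x^{\mathbf 1}=1$, $x^|=x$, with $k$-linear operations $\omega_k$ ($k\ge2$), $\omega_k(x^{T_1},\dots,x^{T_k})=x^T$ where $T$ is obtained by attaching the nonempty $T_i$ in order as subtrees of the children of a new root (if exactly one is nonempty, $T$ is that one; if none, $T=\mathbf 1$). $\mathbb C\{\{x\}\}_{\mathbb P}$ is the algebra of formal series $\sum_T\gamma_Tx^T$, the operations extended degreewise. For $f=\sum_T\gamma_Tx^T$ and $c\in\mathbb C$ write $f(cx)=\sum_T\gamma_Tc^{\deg T}x^T$. The $k$-ary exponential series $\exp_k(x)$ is the unique $f\in\mathbb C\{\{x\}\}_{\mathbb P}$ of the form $f=1+x+(\text{terms }x^T\text{ with }\deg T\ge2)$ satisfying $\omega_k(f,\dots,f)=f(kx)$. Radius of convergence: $\operatorname{rad}(\sum_T\gamma_Tx^T)=\sup\{\rho\ge0:\sum_T|\gamma_T|\rho^{\deg T}<\infty\}$. *)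

theory Defs
  imports "HOL-Analysis.Analysis" "HOL-Library.Extended_Real"
begin

text \<open>Elements of the set P are represented as \<open>ptree option\<close>:
  \<open>None\<close> is the empty tree 1, \<open>Some (Nd [])\<close> is the one-vertex tree |.\<close>

datatype ptree = Nd "ptree list"

fun reduced :: "ptree \<Rightarrow> bool" where
  "reduced (Nd ts) = (length ts \<noteq> 1 \<and> list_all reduced ts)"

fun leaves :: "ptree \<Rightarrow> nat" where
  "leaves (Nd []) = 1"
| "leaves (Nd (t # ts)) = leaves t + sum_list (map leaves ts)"

definition PT :: "ptree option set" where
  "PT = {T. case T of None \<Rightarrow> True | Some t \<Rightarrow> reduced t}"

fun pdeg :: "ptree option \<Rightarrow> nat" where
  "pdeg None = 0"
| "pdeg (Some t) = leaves t"

definition omega :: "ptree option list \<Rightarrow> ptree option" where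
  "omega Ts = (let ne = [t. Some t \<leftarrow> Ts] in
     (case ne of [] \<Rightarrow> None | [t] \<Rightarrow> Some t | _ \<Rightarrow> Some (Nd ne)))"

type_synonym pseries = "ptree option \<Rightarrow> complex"

definition omega_ser :: "nat \<Rightarrow> pseries list \<Rightarrow> pseries" where
  "omega_ser k fs T =
     (\<Sum>Ts \<in> {Ts. length Ts = k \<and> set Ts \<subseteq> PT \<and> omega Ts = T}.
        \<Prod>i<k. (fs ! i) (Ts ! i))"

definition scale_ser :: "complex \<Rightarrow> pseries \<Rightarrow> pseries" where
  "scale_ser c f T = c ^ pdeg T * f T"

definition is_exp :: "nat \<Rightarrow> pseries \<Rightarrow> bool" where
  "is_exp k f \<longleftrightarrow>
     (\<forall>T. T \<notin> PT \<longrightarrow> f T = 0) \<and>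
     f None = 1 \<and> f (Some (Nd [])) = 1 \<and>
     (\<forall>T\<in>PT. pdeg T < 2 \<longrightarrow> T \<noteq> None \<longrightarrow> T \<noteq> Some (Nd []) \<longrightarrow> f T = 0) \<and>
     (\<forall>T\<in>PT. omega_ser k (replicate k f) T = scale_ser (of_nat k) f T)"

definition exp_k :: "nat \<Rightarrow> pseries" where
  "exp_k k = (THE f. is_exp k f)"

definition rad :: "pseries \<Rightarrow> ereal" where
  "rad f = Sup {ereal \<rho> | \<rho>. \<rho> \<ge> 0 \<and> (\<lambda>T. norm (f T) * \<rho> ^ pdeg T) summable_on PT}"

end

theory Submission imports Defs "HOL-Computational_Algebra.Formal_Power_Series" begin

unbundle no vec_syntax
unbundle fps_syntax

fun aco :: "nat \<Rightarrow> ptree \<Rightarrow> real" where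
  "aco k (Nd cs) = (if cs = [] then 1 else
     of_nat (k choose length cs) * prod_list (map (aco k) cs) / (of_nat k ^ leaves (Nd cs) - of_nat k))"

fun kids :: "ptree \<Rightarrow> ptree list" where "kids (Nd cs) = cs"

definition filt :: "ptree option list \<Rightarrow> ptree list" where
  "filt Ts = [t. Some t \<leftarrow> Ts]"

lemma filt_simps[simp]: "filt [] = []" "filt (a # Ts) = (case a of None \<Rightarrow> filt Ts | Some c \<Rightarrow> c # filt Ts)"
  by (auto simp: filt_def split: option.splits)

lemma filt_set: "Some c \<in> set Ts \<longleftrightarrow> c \<in> set (filt Ts)"
  proof (induction Ts)
  case (Cons a Ts) then show ?case by (cases a) auto
qed simp

lemma filt_prod: "f None = 1 \<Longrightarrow> prod_list (map f Ts) = prod_list (map (f \<circ> Some) (filt Ts))"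
  proof (induction Ts)
  case (Cons a Ts) then show ?case by (cases a) auto
qed simp

lemma filt_deg: "sum_list (map pdeg Ts) = sum_list (map leaves (filt Ts))"
  proof (induction Ts)
  case (Cons a Ts) then show ?case by (cases a) auto
qed simp

lemma leaves_Nd: "cs \<noteq> [] \<Longrightarrow> leaves (Nd cs) = sum_list (map leaves cs)"
  by (cases cs) auto

lemma leaves_pos: "leaves t \<ge> 1"
  by (induction t rule: leaves.induct) auto

lemma omega_eq: "omega Ts = (case filt Ts of [] \<Rightarrow> None | [t] \<Rightarrow> Some t | ne \<Rightarrow> Some (Nd ne))"
  unfolding omega_def Let_def filt_def[symmetric] by (auto split: list.splits)

lemma omega_None: "omega Ts = None \<longleftrightarrow> filt Ts = []"
  unfolding omega_eq by (auto split: list.splits)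

lemma omega_Some: "omega Ts = Some t \<longleftrightarrow> filt Ts = [t] \<or> (length (filt Ts) \<ge> 2 \<and> t = Nd (filt Ts))"
  unfolding omega_eq by (auto split: list.splits)

definition B :: "nat \<Rightarrow> ptree list \<Rightarrow> ptree option list set" where
  "B k cs = {Ts. length Ts = k \<and> filt Ts = cs}"

lemma B_Suc: "B (Suc k) cs = Cons None ` B k cs \<union>
   (case cs of [] \<Rightarrow> {} | c # cs' \<Rightarrow> Cons (Some c) ` B k cs')"
  unfolding B_def
  apply (rule set_eqI)
  subgoal for Ts
    by (cases Ts) (auto split: list.splits option.splits simp: image_iff)
  done

lemma B_fin_card: "finite (B k cs) \<and> card (B k cs) = k choose length cs"
proof (induction k arbitrary: cs)
  case 0
  have "B 0 cs = (if cs = [] then {[]} else {})" unfolding B_def by auto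
  then show ?case by auto
next
  case (Suc k)
  show ?case
  proof (cases cs)
    case Nil
    then show ?thesis using Suc[of "[]"] unfolding B_Suc
      by (simp add: card_image)
  next
    case (Cons c cs')
    have d: "Cons None ` B k cs \<inter> Cons (Some c) ` B k cs' = {}" by auto
    show ?thesis using Suc[of cs] Suc[of cs'] d unfolding B_Suc Cons
      by (simp add: card_image card_Un_disjoint)
  qed
qed


lemma prod_nth: "(\<Prod>i<length Ts. f (Ts ! i)) = prod_list (map f Ts)"
  by (induction Ts) (simp_all add: prod.lessThan_Suc_shift del: prod.lessThan_Suc)

lemma sum_B: "f None = 1 \<Longrightarrow> (\<Sum>Ts\<in>B k cs. prod_list (map f Ts)) = of_nat (k choose length cs) * prod_list (map (f \<circ> Some) cs)"
proof -
  assume f: "f None = 1"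
  have "(\<Sum>Ts\<in>B k cs. prod_list (map f Ts)) = (\<Sum>Ts\<in>B k cs. prod_list (map (f \<circ> Some) cs))"
    by (rule sum.cong) (auto simp: B_def filt_prod[of f, OF f])
  then show ?thesis using B_fin_card[of k cs] by simp
qed

lemma setPT: "set Ts \<subseteq> PT \<longleftrightarrow> (\<forall>c\<in>set (filt Ts). reduced c)"
proof (induction Ts)
  case (Cons a Ts) then show ?case by (cases a) (auto simp: PT_def)
qed simp

lemma A_None: "{Ts. length Ts = k \<and> set Ts \<subseteq> PT \<and> omega Ts = None} = B k []"
  unfolding B_def omega_None using setPT by auto

lemma reduced_Nd: "reduced t \<Longrightarrow> t = Nd (kids t) \<and> length (kids t) \<noteq> 1 \<and> (\<forall>c\<in>set (kids t). reduced c)"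
  by (cases t) (auto simp: list_all_iff)

lemma A_Some: assumes "reduced t"
  shows "{Ts. length Ts = k \<and> set Ts \<subseteq> PT \<and> omega Ts = Some t} =
     B k [t] \<union> (if 2 \<le> length (kids t) then B k (kids t) else {})"
proof -
  note r = reduced_Nd[OF assms]
  show ?thesis
    unfolding B_def omega_Some setPT
    apply (rule set_eqI)
    using r apply (auto simp: assms)
    done
qed

lemma omega_ser_Some: assumes f: "f None = 1" and r: "reduced t"
  shows "omega_ser k (replicate k f) (Some t) = of_nat k * f (Some t) +
     (if 2 \<le> length (kids t) then of_nat (k choose length (kids t)) * prod_list (map (f \<circ> Some) (kids t)) else 0)"
proof -
  have ne: "2 \<le> length (kids t) \<Longrightarrow> [t] \<noteq> kids t" by (metis One_nat_def length_Cons list.size(3) numeral_le_one_iff semiring_norm(69))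
  have "omega_ser k (replicate k f) (Some t) =
     (\<Sum>Ts \<in> B k [t] \<union> (if 2 \<le> length (kids t) then B k (kids t) else {}). prod_list (map f Ts))"
    unfolding omega_ser_def A_Some[OF r]
    by (rule sum.cong) (auto simp: B_def prod_nth split: if_splits)
  also have "\<dots> = (\<Sum>Ts \<in> B k [t]. prod_list (map f Ts)) +
     (\<Sum>Ts \<in> (if 2 \<le> length (kids t) then B k (kids t) else {}). prod_list (map f Ts))"
    apply (rule sum.union_disjoint)
    using B_fin_card apply auto
    using ne by (auto simp: B_def)
  finally show ?thesis using sum_B[of f, OF f] by simp
qed

definition fser :: "nat \<Rightarrow> pseries" where
  "fser k T = (case T of None \<Rightarrow> 1 | Some t \<Rightarrow> if reduced t then complex_of_real (aco k t) else 0)"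

lemma of_real_prod_list: "of_real (prod_list (map g xs)) = prod_list (map (\<lambda>x. (of_real (g x) :: complex)) xs)"
  by (induction xs) auto

lemma sum_list_ge_length: "(\<forall>x\<in>set xs. (1::nat) \<le> g x) \<Longrightarrow> length xs \<le> sum_list (map g xs)"
  by (induction xs) auto

lemma leaves_ge2: "length cs \<ge> 2 \<Longrightarrow> leaves (Nd cs) \<ge> 2"
proof -
  assume a: "length cs \<ge> 2"
  then have "cs \<noteq> []" by auto
  then have "leaves (Nd cs) = sum_list (map leaves cs)" by (rule leaves_Nd)
  also have "\<dots> \<ge> length cs" using leaves_pos by (intro sum_list_ge_length) auto
  finally show ?thesis using a by simp
qed

lemma kpow_gt: "(k::nat) \<ge> 2 \<Longrightarrow> n \<ge> 2 \<Longrightarrow> k ^ n > k"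
proof -
  assume k: "k \<ge> 2" and n: "n \<ge> 2"
  have "k ^ n \<ge> k ^ 2" using k n by (intro power_increasing) auto
  moreover have "k ^ 2 > k" using k by (simp add: power2_eq_square)
  ultimately show ?thesis by simp
qed

lemma kpow_ne: "(k::nat) \<ge> 2 \<Longrightarrow> n \<ge> 2 \<Longrightarrow> (of_nat k ^ n :: 'a::{semiring_char_0, semiring_1}) \<noteq> of_nat k"
proof -
  assume k: "k \<ge> 2" and n: "n \<ge> 2"
  have "k ^ n \<noteq> k" using kpow_gt[OF k n] by simp
  then have "(of_nat (k ^ n) :: 'a) \<noteq> of_nat k" by (metis of_nat_eq_iff)
  then show ?thesis by simp
qed

lemma omega_ser_None: assumes f: "f None = 1"
  shows "omega_ser k (replicate k f) None = 1"
proof -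
  have "omega_ser k (replicate k f) None = (\<Sum>Ts \<in> B k []. prod_list (map f Ts))"
    unfolding omega_ser_def A_None
    by (rule sum.cong) (auto simp: B_def prod_nth)
  then show ?thesis using sum_B[of f, OF f, of k "[]"] by simp
qed

lemma reduced_leaves1: "reduced t \<Longrightarrow> leaves t < 2 \<Longrightarrow> t = Nd []"
  using reduced_Nd[of t] leaves_ge2[of "kids t"]
  by (metis One_nat_def Suc_1 kids.simps length_0_conv less_2_cases_iff linorder_not_less)

lemma is_exp_fser: assumes k: "k \<ge> 2" shows "is_exp k (fser k)"
  unfolding is_exp_def
proof (intro conjI ballI allI impI)
  fix T assume "T \<notin> PT" then show "fser k T = 0" by (auto simp: PT_def fser_def split: option.splits)
next
  show "fser k None = 1" by (simp add: fser_def)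
next
  show "fser k (Some (Nd [])) = 1" by (simp add: fser_def)
next
  fix T assume "T \<in> PT" "pdeg T < 2" "T \<noteq> None" "T \<noteq> Some (Nd [])"
  then show "fser k T = 0" using reduced_leaves1 by (auto simp: PT_def split: option.splits)
next
  fix T assume T: "T \<in> PT"
  have f1: "fser k None = 1" by (simp add: fser_def)
  show "omega_ser k (replicate k (fser k)) T = scale_ser (of_nat k) (fser k) T"
  proof (cases T)
    case None
    then show ?thesis using omega_ser_None[of "fser k", OF f1] by (simp add: scale_ser_def fser_def)
  next
    case (Some t)
    then have r: "reduced t" using T by (simp add: PT_def)
    obtain cs where t: "t = Nd cs" by (cases t) auto
    have rc: "\<forall>c\<in>set cs. reduced c" "length cs \<noteq> 1" using r t by (auto simp: list_all_iff)
    show ?thesis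
    proof (cases "cs = []")
      case True
      then show ?thesis unfolding Some omega_ser_Some[of "fser k", OF f1 r]
        by (simp add: scale_ser_def fser_def t)
    next
      case False
      then have m: "length cs \<ge> 2" using rc by (cases cs) (auto simp: Suc_le_eq)
      have n: "leaves t \<ge> 2" using leaves_ge2[OF m] t by simp
      have d: "(of_nat k ^ leaves t - of_nat k :: real) \<noteq> 0" using kpow_ne[OF k n] by simp
      have pr: "prod_list (map (fser k \<circ> Some) cs) = of_real (prod_list (map (aco k) cs))"
        unfolding of_real_prod_list using rc by (intro arg_cong[where f=prod_list] map_cong) (auto simp: fser_def)
      define C where "C = (of_nat (k choose length cs) :: real)"
      define P where "P = prod_list (map (aco k) cs)"
      define K where "K = (of_nat k ^ leaves t - of_nat k :: real)"
      have a: "aco k t = C * P / K" using False by (simp add: t C_def P_def K_def)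
      have "omega_ser k (replicate k (fser k)) T = of_nat k * of_real (C * P / K) + of_real C * of_real P"
      proof -
        have e1: "fser k (Some t) = of_real (C * P / K)" using r a by (simp add: fser_def)
        have e2: "(of_nat (k choose length cs) :: complex) = of_real C" by (simp add: C_def)
        show ?thesis
          unfolding Some omega_ser_Some[of "fser k", OF f1 r] e1 using m
          by (simp add: t pr e2 P_def)
      qed
      also have "\<dots> = of_real (of_nat k * (C * P / K) + C * P)" by simp
      also have "of_nat k * (C * P / K) + C * P = (of_nat k ^ leaves t) * (C * P / K)"
        using d unfolding K_def by (simp add: field_simps)
      finally show ?thesis unfolding Some scale_ser_def fser_def using r a by simp
    qed
  qed
qed

lemma is_exp_rec: assumes e: "is_exp k g" and k: "k \<ge> 2" and r: "reduced (Nd cs)" and m: "length cs \<ge> 2"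
  shows "g (Some (Nd cs)) = of_nat (k choose length cs) * prod_list (map (g \<circ> Some) cs) / (of_nat k ^ leaves (Nd cs) - of_nat k)"
proof -
  have g1: "g None = 1" using e by (simp add: is_exp_def)
  have T: "Some (Nd cs) \<in> PT" using r by (simp add: PT_def)
  have eq: "omega_ser k (replicate k g) (Some (Nd cs)) = scale_ser (of_nat k) g (Some (Nd cs))"
    using e T by (simp add: is_exp_def)
  have n: "leaves (Nd cs) \<ge> 2" using leaves_ge2[OF m] .
  have d: "(of_nat k ^ leaves (Nd cs) - of_nat k :: complex) \<noteq> 0" using kpow_ne[OF k n] by simp
  from eq have "of_nat k * g (Some (Nd cs)) + of_nat (k choose length cs) * prod_list (map (g \<circ> Some) cs)
     = of_nat k ^ leaves (Nd cs) * g (Some (Nd cs))"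
    unfolding omega_ser_Some[of g, OF g1 r] using m by (simp add: scale_ser_def)
  then show ?thesis using d by (simp add: field_simps)
qed

lemma is_exp_unique: assumes k: "k \<ge> 2" and eg: "is_exp k g" and eh: "is_exp k h" shows "g = h"
proof
  fix T
  have red: "reduced t \<Longrightarrow> g (Some t) = h (Some t)" for t
  proof (induction t)
    case (Nd cs)
    show ?case
    proof (cases "cs = []")
      case True then show ?thesis using eg eh by (simp add: is_exp_def)
    next
      case False
      have rc: "\<forall>c\<in>set cs. reduced c" "length cs \<noteq> 1" using Nd.prems by (auto simp: list_all_iff)
      then have m: "length cs \<ge> 2" using False by (cases cs) (auto simp: Suc_le_eq)
      have meq: "map (g \<circ> Some) cs = map (h \<circ> Some) cs" using Nd.IH rc by (intro map_cong) auto
      show ?thesis unfolding is_exp_rec[OF eg k Nd.prems m] is_exp_rec[OF eh k Nd.prems m] meq ..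
    qed
  qed
  show "g T = h T"
  proof (cases T)
    case None then show ?thesis using eg eh by (simp add: is_exp_def)
  next
    case (Some t)
    show ?thesis
    proof (cases "reduced t")
      case True then show ?thesis using red Some by simp
    next
      case False then have "T \<notin> PT" using Some by (simp add: PT_def)
      then show ?thesis using eg eh by (simp add: is_exp_def)
    qed
  qed
qed

lemma exp_k_fser: "k \<ge> 2 \<Longrightarrow> exp_k k = fser k"
  unfolding exp_k_def by (rule the_equality) (auto intro: is_exp_fser is_exp_unique)

lemma child_lt: assumes c: "c \<in> set cs" and m: "length cs \<ge> 2" shows "leaves c < leaves (Nd cs)"
proof -
  have ne: "cs \<noteq> []" using c by auto
  have "leaves (Nd cs) = leaves c + sum_list (map leaves (remove1 c cs))"
    unfolding leaves_Nd[OF ne] by (rule sum_list_map_remove1[OF c])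
  moreover have "length (remove1 c cs) \<ge> 1" using m c by (simp add: length_remove1)
  moreover have "length (remove1 c cs) \<le> sum_list (map leaves (remove1 c cs))"
    using leaves_pos by (intro sum_list_ge_length) auto
  ultimately show ?thesis by simp
qed

lemma finite_red: "finite {t. reduced t \<and> leaves t \<le> n}"
proof (induction n)
  case 0
  have "\<And>t. \<not> leaves t \<le> 0" using leaves_pos by (metis not_one_le_zero le_trans)
  then have "{t. reduced t \<and> leaves t \<le> 0} = {}" by blast
  then show ?case by (metis finite.emptyI)
next
  case (Suc n)
  have "{t. reduced t \<and> leaves t \<le> Suc n} \<subseteq> {Nd []} \<union> Nd ` {cs. set cs \<subseteq> {t. reduced t \<and> leaves t \<le> n} \<and> length cs \<le> Suc n}"
  proof
    fix t assume t: "t \<in> {t. reduced t \<and> leaves t \<le> Suc n}"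
    obtain cs where tc: "t = Nd cs" by (cases t) auto
    show "t \<in> {Nd []} \<union> Nd ` {cs. set cs \<subseteq> {t. reduced t \<and> leaves t \<le> n} \<and> length cs \<le> Suc n}"
    proof (cases "cs = []")
      case True then show ?thesis using tc by simp
    next
      case False
      have rc: "\<forall>c\<in>set cs. reduced c" "length cs \<noteq> 1" using t tc by (auto simp: list_all_iff)
      then have m: "length cs \<ge> 2" using False by (cases cs) (auto simp: Suc_le_eq)
      have "length cs \<le> leaves (Nd cs)" unfolding leaves_Nd[OF False]
        using leaves_pos by (intro sum_list_ge_length) auto
      moreover have "\<forall>c\<in>set cs. leaves c \<le> n" proof
        fix c assume "c \<in> set cs"
        then have "leaves c < leaves t" using child_lt[OF _ m] tc by blast
        then show "leaves c \<le> n" using t by simp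
      qed
      ultimately show ?thesis using t tc rc by auto
    qed
  qed
  moreover have "finite ({Nd []} \<union> Nd ` {cs. set cs \<subseteq> {t. reduced t \<and> leaves t \<le> n} \<and> length cs \<le> Suc n})"
    using finite_lists_length_le[OF Suc.IH] by simp
  ultimately show ?case by (rule finite_subset)
qed

definition D :: "nat \<Rightarrow> ptree option set" where "D n = {T\<in>PT. pdeg T = n}"
definition U :: "nat \<Rightarrow> ptree option set" where "U n = {T\<in>PT. pdeg T \<le> n}"
definition L :: "nat \<Rightarrow> nat \<Rightarrow> ptree option list set" where
  "L j n = {Ts. length Ts = j \<and> set Ts \<subseteq> PT \<and> sum_list (map pdeg Ts) = n}"

lemma finite_U: "finite (U n)"
proof -
  have "U n \<subseteq> {None} \<union> Some ` {t. reduced t \<and> leaves t \<le> n}"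
  proof
    fix T assume T: "T \<in> U n"
    show "T \<in> {None} \<union> Some ` {t. reduced t \<and> leaves t \<le> n}"
    proof (cases T)
      case (Some t) then show ?thesis using T by (auto simp: U_def PT_def)
    qed simp
  qed
  then show ?thesis using finite_red[of n] by (meson finite.insertI finite_Un finite_imageI finite_subset finite.emptyI)
qed

lemma finite_D: "finite (D n)"
  using finite_U[of n] by (rule finite_subset[rotated]) (auto simp: D_def U_def)

lemma finite_L: "finite (L j n)"
proof -
  have "L j n \<subseteq> {Ts. set Ts \<subseteq> U n \<and> length Ts \<le> j}"
  proof
    fix Ts assume "Ts \<in> L j n"
    then have a: "length Ts = j" "set Ts \<subseteq> PT" "sum_list (map pdeg Ts) = n" by (auto simp: L_def)
    have "\<forall>x\<in>set Ts. pdeg x \<le> n"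
      using a(3) member_le_sum_list[of _ "map pdeg Ts"] by auto
    then show "Ts \<in> {Ts. set Ts \<subseteq> U n \<and> length Ts \<le> j}" using a by (auto simp: U_def)
  qed
  then show ?thesis using finite_lists_length_le[OF finite_U] by (rule finite_subset)
qed

definition Fs :: "pseries \<Rightarrow> complex fps" where "Fs f = Abs_fps (\<lambda>m. \<Sum>T\<in>D m. f T)"

lemma L_pow: "(\<Sum>Ts\<in>L j n. prod_list (map f Ts)) = (Fs f ^ j) $ n"
proof (induction j arbitrary: n)
  case 0
  have "L 0 n = (if n = 0 then {[]} else {})" by (auto simp: L_def)
  then show ?case by simp
next
  case (Suc j)
  have img: "L (Suc j) n = (\<lambda>(T,Ts). T # Ts) ` (SIGMA T:U n. L j (n - pdeg T))"
  proof (rule set_eqI)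
    fix x
    show "x \<in> L (Suc j) n \<longleftrightarrow> x \<in> (\<lambda>(T,Ts). T # Ts) ` (SIGMA T:U n. L j (n - pdeg T))"
    proof
      assume "x \<in> L (Suc j) n"
      then obtain T Ts where x: "x = T # Ts" "length Ts = j" "T \<in> PT" "set Ts \<subseteq> PT"
        "pdeg T + sum_list (map pdeg Ts) = n" unfolding L_def by (cases x) auto
      then have "(T, Ts) \<in> (SIGMA T:U n. L j (n - pdeg T))" by (auto simp: U_def L_def)
      then show "x \<in> (\<lambda>(T,Ts). T # Ts) ` (SIGMA T:U n. L j (n - pdeg T))" using x(1) by force
    next
      assume "x \<in> (\<lambda>(T,Ts). T # Ts) ` (SIGMA T:U n. L j (n - pdeg T))"
      then show "x \<in> L (Suc j) n" by (auto simp: U_def L_def)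
    qed
  qed
  have inj: "inj_on (\<lambda>(T,Ts). T # Ts) (SIGMA T:U n. L j (n - pdeg T))" by (auto simp: inj_on_def)
  have "(\<Sum>Ts\<in>L (Suc j) n. prod_list (map f Ts)) =
      (\<Sum>p\<in>(SIGMA T:U n. L j (n - pdeg T)). prod_list (map f ((\<lambda>(T,Ts). T # Ts) p)))"
    unfolding img sum.reindex[OF inj] by (simp add: comp_def)
  also have "\<dots> = (\<Sum>T\<in>U n. \<Sum>Ts\<in>L j (n - pdeg T). f T * prod_list (map f Ts))"
    by (subst sum.Sigma) (auto simp: finite_U finite_L case_prod_beta intro!: sum.cong)
  also have "\<dots> = (\<Sum>T\<in>U n. f T * (Fs f ^ j) $ (n - pdeg T))"
    by (intro sum.cong refl) (simp add: sum_distrib_left[symmetric] Suc.IH)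
  also have "\<dots> = (\<Sum>i\<in>{0..n}. \<Sum>T\<in>{T. T \<in> U n \<and> pdeg T = i}. f T * (Fs f ^ j) $ (n - pdeg T))"
    apply (rule sum.group[symmetric]) apply (rule finite_U) by (auto simp: U_def)
  also have "\<dots> = (\<Sum>i\<in>{0..n}. Fs f $ i * (Fs f ^ j) $ (n - i))"
  proof (rule sum.cong[OF refl])
    fix i assume "i \<in> {0..n}"
    then have "{T. T \<in> U n \<and> pdeg T = i} = D i" by (auto simp: U_def D_def)
    then show "(\<Sum>T\<in>{T. T \<in> U n \<and> pdeg T = i}. f T * (Fs f ^ j) $ (n - pdeg T)) = Fs f $ i * (Fs f ^ j) $ (n - i)"
      by (simp add: Fs_def sum_distrib_right D_def)
  qed
  also have "\<dots> = (Fs f ^ Suc j) $ n" by (simp add: fps_mult_nth)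
  finally show ?case .
qed

lemma omega_PT: assumes "set Ts \<subseteq> PT"
  shows "omega Ts \<in> PT \<and> pdeg (omega Ts) = sum_list (map pdeg Ts)"
proof -
  have r: "\<forall>c\<in>set (filt Ts). reduced c" using assms setPT by blast
  show ?thesis
  proof (cases "filt Ts")
    case Nil then show ?thesis by (simp add: omega_eq filt_deg PT_def)
  next
    case (Cons x r1)
    show ?thesis
    proof (cases r1)
      case Nil then show ?thesis using Cons r by (simp add: omega_eq filt_deg PT_def)
    next
      case (Cons y r2)
      then show ?thesis using \<open>filt Ts = x # r1\<close> r by (simp add: omega_eq filt_deg PT_def list_all_iff)
    qed
  qed
qed

lemma fs_eq: assumes e: "is_exp k f" shows "(Fs f ^ k) $ n = of_nat k ^ n * Fs f $ n"
proof -
  have "(Fs f ^ k) $ n = (\<Sum>Ts\<in>L k n. prod_list (map f Ts))" by (rule L_pow[symmetric])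
  also have "\<dots> = (\<Sum>T\<in>D n. \<Sum>Ts\<in>{Ts. Ts \<in> L k n \<and> omega Ts = T}. prod_list (map f Ts))"
    apply (rule sum.group[symmetric]) apply (rule finite_L) apply (rule finite_D)
    by (auto simp: L_def D_def omega_PT)
  also have "\<dots> = (\<Sum>T\<in>D n. omega_ser k (replicate k f) T)"
  proof (rule sum.cong[OF refl])
    fix T assume T: "T \<in> D n"
    have "{Ts. Ts \<in> L k n \<and> omega Ts = T} = {Ts. length Ts = k \<and> set Ts \<subseteq> PT \<and> omega Ts = T}"
      using T omega_PT by (auto simp: L_def D_def)
    then show "(\<Sum>Ts\<in>{Ts. Ts \<in> L k n \<and> omega Ts = T}. prod_list (map f Ts)) = omega_ser k (replicate k f) T"
      unfolding omega_ser_def by (auto simp: prod_nth intro!: sum.cong)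
  qed
  also have "\<dots> = (\<Sum>T\<in>D n. of_nat k ^ n * f T)"
    using e by (intro sum.cong) (auto simp: is_exp_def D_def scale_ser_def)
  also have "\<dots> = of_nat k ^ n * Fs f $ n" by (simp add: Fs_def sum_distrib_left)
  finally show ?thesis .
qed

lemma fps_uniq: assumes k: "k \<ge> 2"
  and eF: "\<And>n. (F ^ k) $ n = of_nat k ^ n * F $ n" and eG: "\<And>n. (G ^ k) $ n = of_nat k ^ n * G $ n"
  and F0: "F $ 0 = (1::complex)" and G0: "G $ 0 = 1" and F1: "F $ 1 = G $ 1"
  shows "F $ n = G $ n"
proof (induction n rule: less_induct)
  case (less n)
  show ?case
  proof (cases "n \<ge> 2")
    case False
    then have "n = 0 \<or> n = 1" by auto
    then show ?thesis using F0 G0 F1 by auto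
  next
    case True
    then obtain m where m: "n = Suc m" by (cases n) auto
    define H where "H = (\<Sum>i<k. G ^ (k - Suc i) * F ^ i)"
    have H0: "H $ 0 = of_nat k"
      unfolding H_def fps_sum_nth by (simp add: fps_mult_nth_0 fps_power_zeroth F0 G0)
    have "(F ^ k - G ^ k) $ n = ((F - G) * H) $ n" unfolding H_def by (simp add: power_diff_sumr2)
    also have "\<dots> = (\<Sum>i=0..n. (F - G) $ i * H $ (n - i))" by (rule fps_mult_nth)
    also have "\<dots> = (\<Sum>i=0..m. (F - G) $ i * H $ (n - i)) + (F - G) $ n * H $ 0"
      unfolding m by (simp add: sum.atLeast0_atMost_Suc)
    also have "(\<Sum>i=0..m. (F - G) $ i * H $ (n - i)) = 0"
      using less.IH m by (intro sum.neutral) auto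
    finally have "of_nat k ^ n * F $ n - of_nat k ^ n * G $ n = (F $ n - G $ n) * of_nat k"
      using eF eG H0 by simp
    then have "(of_nat k ^ n - of_nat k) * (F $ n - G $ n) = 0" by (simp add: algebra_simps)
    moreover have "(of_nat k ^ n - of_nat k :: complex) \<noteq> 0" using kpow_ne[OF k True] by simp
    ultimately show ?thesis by simp
  qed
qed

lemma aco_nonneg: assumes k: "k \<ge> 1" shows "aco k t \<ge> 0"
proof (induction t)
  case (Nd cs)
  have "(of_nat k :: real) \<le> of_nat k ^ leaves (Nd cs)"
    using k leaves_pos[of "Nd cs"] by (metis of_nat_1 of_nat_le_iff of_nat_power power_one_right power_increasing)
  then have "(of_nat k ^ leaves (Nd cs) - of_nat k :: real) \<ge> 0" by simp
  moreover have "prod_list (map (aco k) cs) \<ge> 0" using Nd.IH by (intro prod_list_nonneg) auto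
  ultimately show ?case by simp
qed

lemma exp_bound: "(0::real) \<le> \<rho> \<Longrightarrow> (\<Sum>i\<in>{0..N}. \<rho> ^ i / fact i) \<le> exp \<rho>"
proof -
  assume r: "0 \<le> \<rho>"
  have "(\<Sum>i\<in>{0..N}. \<rho> ^ i /\<^sub>R fact i) \<le> (\<Sum>n. \<rho> ^ n /\<^sub>R fact n)"
    by (rule sum_le_suminf[OF summable_exp_generic]) (auto simp: r)
  then show ?thesis by (simp add: exp_def divide_inverse_commute)
qed

lemma D0: "D 0 = {None}"
proof -
  have "\<And>t. leaves t \<noteq> 0" using leaves_pos by (metis not_one_le_zero)
  show ?thesis
  proof (rule set_eqI)
    fix T show "T \<in> D 0 \<longleftrightarrow> T \<in> {None}"
      using \<open>\<And>t. leaves t \<noteq> 0\<close> by (cases T) (auto simp: D_def PT_def)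
  qed
qed

lemma D1: "D 1 = {Some (Nd [])}"
proof
  show "D 1 \<subseteq> {Some (Nd [])}"
  proof
    fix T assume T: "T \<in> D 1"
    then obtain t where t: "T = Some t" by (cases T) (auto simp: D_def)
    then have "reduced t" "leaves t < 2" using T by (auto simp: D_def PT_def)
    then show "T \<in> {Some (Nd [])}" using reduced_leaves1 t by auto
  qed
qed (auto simp: D_def PT_def)

lemma fser_real: "T \<in> PT \<Longrightarrow> k \<ge> 1 \<Longrightarrow> fser k T \<in> \<real> \<and> Re (fser k T) \<ge> 0 \<and> norm (fser k T) = Re (fser k T)"
  using aco_nonneg by (auto simp: fser_def PT_def split: option.splits)

lemma degsum: assumes k: "k \<ge> 2" shows "Fs (fser k) $ n = 1 / of_nat (fact n)"
proof -
  have "Fs (fser k) $ n = fps_exp 1 $ n"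
  proof (rule fps_uniq[OF k])
    show "(Fs (fser k) ^ k) $ n = of_nat k ^ n * Fs (fser k) $ n" for n
      by (rule fs_eq[OF is_exp_fser[OF k]])
    show "(fps_exp 1 ^ k) $ n = of_nat k ^ n * fps_exp (1::complex) $ n" for n
      by (simp add: fps_exp_power_mult)
    show "Fs (fser k) $ 0 = 1" by (simp add: Fs_def D0 fser_def)
    show "fps_exp (1::complex) $ 0 = 1" by simp
    show "Fs (fser k) $ 1 = fps_exp 1 $ 1" using D1 by (simp add: Fs_def fser_def)
  qed
  then show ?thesis by simp
qed

theorem mainTheorem6:
  fixes k :: nat
  assumes "k \<ge> 2"
  shows "(\<forall>T\<in>PT. exp_k k T \<in> \<real> \<and> Re (exp_k k T) \<ge> 0)
       \<and> (\<forall>n::nat. (\<Sum>T\<in>{T\<in>PT. pdeg T = n}. exp_k k T) = 1 / of_nat (fact n))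
       \<and> rad (exp_k k) = \<infinity>"
proof (intro conjI allI ballI)
  have k: "k \<ge> 2" by (rule assms)
  have e: "exp_k k = fser k" by (rule exp_k_fser[OF k])
  fix T assume "T \<in> PT"
  then show "exp_k k T \<in> \<real>" "Re (exp_k k T) \<ge> 0" using fser_real[of T k] k e by auto
next
  have k: "k \<ge> 2" by (rule assms)
  have e: "exp_k k = fser k" by (rule exp_k_fser[OF k])
  fix n :: nat
  show "(\<Sum>T\<in>{T\<in>PT. pdeg T = n}. exp_k k T) = 1 / of_nat (fact n)"
    using degsum[OF k, of n] by (simp add: e Fs_def D_def)
next
  have k: "k \<ge> 2" by (rule assms)
  have e: "exp_k k = fser k" by (rule exp_k_fser[OF k])
  have summ: "(\<lambda>T. norm (fser k T) * \<rho> ^ pdeg T) summable_on PT" if r: "\<rho> \<ge> 0" for \<rho> :: real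
  proof (rule nonneg_bdd_above_summable_on)
    show "\<And>x. x \<in> PT \<Longrightarrow> 0 \<le> norm (fser k x) * \<rho> ^ pdeg x" using r by simp
    show "bdd_above (sum (\<lambda>T. norm (fser k T) * \<rho> ^ pdeg T) ` {F. F \<subseteq> PT \<and> finite F})"
    proof (rule bdd_aboveI2)
      fix F assume F: "F \<in> {F. F \<subseteq> PT \<and> finite F}"
      define N where "N = Max (pdeg ` F)"
      have sub: "F \<subseteq> U N" using F by (auto simp: U_def N_def)
      have "(\<Sum>T\<in>F. norm (fser k T) * \<rho> ^ pdeg T) \<le> (\<Sum>T\<in>U N. norm (fser k T) * \<rho> ^ pdeg T)"
        using r by (intro sum_mono2[OF finite_U sub]) auto
      also have "\<dots> = (\<Sum>i\<in>{0..N}. \<Sum>T\<in>{T. T \<in> U N \<and> pdeg T = i}. norm (fser k T) * \<rho> ^ pdeg T)"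
        apply (rule sum.group[symmetric]) apply (rule finite_U) by (auto simp: U_def)
      also have "\<dots> = (\<Sum>i\<in>{0..N}. \<rho> ^ i / fact i)"
      proof (rule sum.cong[OF refl])
        fix i assume "i \<in> {0..N}"
        then have Di: "{T. T \<in> U N \<and> pdeg T = i} = D i" by (auto simp: U_def D_def)
        have "(\<Sum>T\<in>D i. norm (fser k T) * \<rho> ^ pdeg T) = (\<Sum>T\<in>D i. Re (fser k T)) * \<rho> ^ i"
          unfolding sum_distrib_right using fser_real[of _ k] k by (intro sum.cong) (auto simp: D_def)
        also have "(\<Sum>T\<in>D i. Re (fser k T)) = Re (Fs (fser k) $ i)" by (simp add: Fs_def)
        also have "\<dots> = 1 / fact i"
        proof -
          have "(1 / of_nat (fact i) :: complex) = of_real (1 / of_nat (fact i))" by simp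
          then show ?thesis unfolding degsum[OF k] by (metis Re_complex_of_real of_nat_fact)
        qed
        finally show "(\<Sum>T\<in>{T. T \<in> U N \<and> pdeg T = i}. norm (fser k T) * \<rho> ^ pdeg T) = \<rho> ^ i / fact i"
          unfolding Di by simp
      qed
      also have "\<dots> \<le> exp \<rho>" by (rule exp_bound[OF r])
      finally show "(\<Sum>T\<in>F. norm (fser k T) * \<rho> ^ pdeg T) \<le> exp \<rho>" .
    qed
  qed
  have "{ereal \<rho> | \<rho>. \<rho> \<ge> 0 \<and> (\<lambda>T. norm (exp_k k T) * \<rho> ^ pdeg T) summable_on PT} = ereal ` {0..}"
    using summ unfolding e by auto
  then have "rad (exp_k k) = (SUP \<rho>\<in>{0..}. ereal \<rho>)" by (simp add: rad_def)
  also have "\<dots> = \<infinity>"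
    by (rule SUP_PInfty) (auto intro!: bexI[of _ "real _"])
  finally show "rad (exp_k k) = \<infinity>" .
qed

end
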